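(* Let $X=\{x_1,\dots,x_M\}\subset\mathbb{R}^n$ be finite and $\phi_1,\dots,\phi_N$ real functions on $X$ such that $V$, $V_{i,j}=\phi_j(x_i)$, has rank $N$. For every $w\in\mathbb{R}^M_{\geq0}$ at which $E$ is defined (i.e. $\det G(w)>0$) and every $u\in\mathbb{R}^M$, $$u^t\,\mathrm{Hess}\,E(w)\,u=0\iff \sum_{i=1}^M u_i\,\phi_h(x_i)\phi_k(x_i)=0\ \text{ for all } h,k\in\{1,\dots,N\},$$ i.e. if and only if $V(\Phi^2;X)^tu=0$, where $V(\Phi^2;X)$ is the matrix whose columns are the values at $x_1,\dots,x_M$ of a basis of $\Phi^2=\operatorname{span}\{\phi_h\phi_k\}$.
   Context: $G(w)=V^t\operatorname{diag}(w)V$ and $E(w)=-\frac1N\log\det G(w)+\|w\|_1$ for $w$ with $\det G(w)>0$. *)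

theory Defs
  imports "HOL-Analysis.Analysis"
begin

definition vmat :: "('m::finite \<Rightarrow> real^'n) \<Rightarrow> ('k::finite \<Rightarrow> real^'n \<Rightarrow> real) \<Rightarrow> real^'k^'m"
  where "vmat x phi = (\<chi> i j. phi j (x i))"

definition diagm :: "real^'m::finite \<Rightarrow> real^'m^'m"
  where "diagm w = (\<chi> i j. if i = j then w $ i else 0)"

definition Gram :: "real^'k::finite^'m::finite \<Rightarrow> real^'m \<Rightarrow> real^'k^'k"
  where "Gram V w = transpose V ** diagm w ** V"

text \<open>E(w) = -(1/N) log det G(w) + ||w||_1, where on the nonnegative orthant
  ||w||_1 = sum of w_i.\<close>
definition Efun :: "real^'k::finite^'m::finite \<Rightarrow> real^'m \<Rightarrow> real"
  where "Efun V w = - (1 / real CARD('k)) * ln (det (Gram V w)) + (\<Sum>i\<in>UNIV. w $ i)"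

definition pderiv_at :: "'m::finite \<Rightarrow> (real^'m \<Rightarrow> real) \<Rightarrow> real^'m \<Rightarrow> real"
  where "pderiv_at i f w = deriv (\<lambda>t. f (w + t *\<^sub>R axis i 1)) 0"

definition hessian :: "(real^'m::finite \<Rightarrow> real) \<Rightarrow> real^'m \<Rightarrow> real^'m^'m"
  where "hessian f w = (\<chi> i j. pderiv_at i (\<lambda>v. pderiv_at j f v) w)"

end

theory Submission
  imports Defs
begin


definition outer :: "real^'k::finite \<Rightarrow> real^'l::finite \<Rightarrow> real^'l^'k"
  where "outer a b = (\<chi> h l. a$h * b$l)"

lemma inv_props:
  fixes M :: "real^'n::finite^'n"
  assumes "invertible M"
  shows "M ** matrix_inv M = mat 1" "matrix_inv M ** M = mat 1"
proof -
  have "\<exists>A'. M ** A' = mat 1 \<and> A' ** M = mat 1" using assms invertible_def by blast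
  from someI_ex[OF this] show "M ** matrix_inv M = mat 1" "matrix_inv M ** M = mat 1"
    unfolding matrix_inv_def by auto
qed

lemma inv_unique:
  fixes M X :: "real^'n::finite^'n"
  assumes "M ** X = mat 1"
  shows "matrix_inv M = X"
proof -
  have inv: "invertible M" using assms invertible_right_inverse by blast
  have "matrix_inv M = matrix_inv M ** (M ** X)" using assms by simp
  also have "\<dots> = X" using inv_props[OF inv] by (simp add: matrix_mul_assoc)
  finally show ?thesis .
qed

lemma mat_outer: "(X::real^'k::finite^'m::finite) ** outer p q = outer (X *v p) q"
  by (simp add: outer_def vec_eq_iff matrix_matrix_mult_def matrix_vector_mult_def sum_distrib_left sum_distrib_right mult_ac)

lemma outer_mat: "outer p q ** (X::real^'m::finite^'k::finite) = outer p (q v* X)"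
  by (simp add: outer_def vec_eq_iff matrix_matrix_mult_def vector_matrix_mult_def sum_distrib_left mult_ac)

lemma outer_outer: "outer p q ** outer r t = (q \<bullet> r) *\<^sub>R outer p t"
  by (simp add: outer_def vec_eq_iff matrix_matrix_mult_def inner_vec_def sum_distrib_left sum_distrib_right mult_ac)

lemma trace_outer: "trace ((X::real^'k::finite^'k) ** outer a a) = a \<bullet> (X *v a)"
  by (simp add: trace_def outer_def matrix_matrix_mult_def matrix_vector_mult_def inner_vec_def
      sum_distrib_left mult_ac)

lemma gram_entry: "Gram V w $ h $ l = (\<Sum>i\<in>UNIV. V$i$h * w$i * V$i$l)"
  by (simp add: Gram_def diagm_def matrix_matrix_mult_def transpose_def sum_distrib_right
      if_distrib sum.delta cong: if_cong)

lemma gram_line: "Gram V (v + t *\<^sub>R axis j 1) = Gram V v + t *\<^sub>R outer (V$j) (V$j)"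
proof -
  have "(\<Sum>i\<in>UNIV. V$i$h * (v + t *\<^sub>R axis j 1)$i * V$i$l)
      = (\<Sum>i\<in>UNIV. V$i$h * v$i * V$i$l) + t * (V$j$h * V$j$l)" for h l
  proof -
    have "(\<Sum>i\<in>UNIV. V$i$h * (v + t *\<^sub>R axis j 1)$i * V$i$l)
      = (\<Sum>i\<in>UNIV. V$i$h * v$i * V$i$l + (if i = j then t * (V$j$h * V$j$l) else 0))"
      by (rule sum.cong) (auto simp: axis_def algebra_simps)
    also have "\<dots> = (\<Sum>i\<in>UNIV. V$i$h * v$i * V$i$l) + t * (V$j$h * V$j$l)"
      by (simp add: sum.distrib)
    finally show ?thesis .
  qed
  then show ?thesis by (simp add: vec_eq_iff gram_entry outer_def)
qed

lemma perm_nonid_prod: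
  assumes p: "p permutes (UNIV::'n::finite set)" and ne: "p \<noteq> id"
  shows "(\<Prod>y\<in>UNIV-{i}. (if y = p y then 1 else 0::real)) = 0"
proof -
  have "\<exists>y. y \<noteq> i \<and> p y \<noteq> y"
  proof -
    obtain z where z: "p z \<noteq> z" using ne by (metis eq_id_iff)
    show ?thesis
    proof (cases "z = i")
      case False then show ?thesis using z by blast
    next
      case True
      have "p (p i) \<noteq> p i"
        using z True permutes_inj[OF p] by (metis injD)
      then show ?thesis using z True by metis
    qed
  qed
  then obtain y where "y \<noteq> i" "p y \<noteq> y" by blast
  then show ?thesis by (intro prod_zero) force+
qed

lemma jacobi0:
  "((\<lambda>t. det (mat 1 + t *\<^sub>R (C::real^'n::finite^'n))) has_real_derivative trace C) (at 0)"
proof -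
  define P where "P = {p. p permutes (UNIV::'n set)}"
  define f where "f p i t = (if i = p i then 1 else 0) + t * C$i$(p i)" for p :: "'n \<Rightarrow> 'n" and i t
  have eq: "det (mat 1 + t *\<^sub>R C) = (\<Sum>p\<in>P. of_int (sign p) * (\<Prod>i\<in>UNIV. f p i t))" for t
    by (simp add: det_def mat_def f_def P_def)
  have D: "((\<lambda>t. \<Sum>p\<in>P. of_int (sign p) * (\<Prod>i\<in>UNIV. f p i t)) has_real_derivative
     (\<Sum>p\<in>P. of_int (sign p) * (\<Sum>i\<in>UNIV. C$i$(p i) * (\<Prod>y\<in>UNIV-{i}. f p y 0)))) (at 0)"
    apply (intro DERIV_sum DERIV_cmult has_field_derivative_prod)
    unfolding f_def by (auto intro!: derivative_eq_intros)
  have "(\<Sum>p\<in>P. of_int (sign p) * (\<Sum>i\<in>UNIV. C$i$(p i) * (\<Prod>y\<in>UNIV-{i}. f p y 0)))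
     = (\<Sum>p\<in>{id}. of_int (sign p) * (\<Sum>i\<in>UNIV. C$i$(p i) * (\<Prod>y\<in>UNIV-{i}. f p y 0)))"
  proof (rule sum.mono_neutral_right)
    show "finite P" unfolding P_def by (simp add: finite_permutations)
  next
    show "{id} \<subseteq> P" by (simp add: P_def)
  next
    show "\<forall>p\<in>P - {id}. of_int (sign p) * (\<Sum>i\<in>UNIV. C$i$(p i) * (\<Prod>y\<in>UNIV-{i}. f p y 0)) = 0"
    proof
      fix p assume "p \<in> P - {id}"
      then have "p permutes UNIV" "p \<noteq> id" by (auto simp: P_def)
      then have z: "(\<Prod>y\<in>UNIV-{i}. f p y 0) = 0" for i
        using perm_nonid_prod[of p i] by (simp add: f_def del: prod_zero_iff)
      show "of_int (sign p) * (\<Sum>i\<in>UNIV. C$i$(p i) * (\<Prod>y\<in>UNIV-{i}. f p y 0)) = 0"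
        by (simp add: z del: prod_zero_iff)
    qed
  qed
  also have "\<dots> = trace C" by (simp add: f_def trace_def)
  finally show ?thesis using D eq by simp
qed


lemma mm_add_r: "((A::real^'n::finite^'m::finite) + B) ** (C::real^'k::finite^'n) = A ** C + B ** C"
  by (simp add: vec_eq_iff matrix_matrix_mult_def sum.distrib algebra_simps)

lemma mm_diff_l: "(A::real^'n::finite^'m::finite) ** ((B::real^'k::finite^'n) - C) = A ** B - A ** C"
  by (simp add: vec_eq_iff matrix_matrix_mult_def sum_subtractf algebra_simps)

lemma mm_scale_l: "(c *\<^sub>R (A::real^'n::finite^'m::finite)) ** (B::real^'k::finite^'n) = c *\<^sub>R (A ** B)"
  by (simp add: vec_eq_iff matrix_matrix_mult_def sum_distrib_left algebra_simps)

lemma mm_scale_r: "(A::real^'n::finite^'m::finite) ** (c *\<^sub>R (B::real^'k::finite^'n)) = c *\<^sub>R (A ** B)"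
  by (simp add: vec_eq_iff matrix_matrix_mult_def sum_distrib_left algebra_simps)

lemma jacobi:
  fixes A B :: "real^'n::finite^'n"
  assumes "invertible A"
  shows "((\<lambda>t. det (A + t *\<^sub>R B)) has_real_derivative det A * trace (matrix_inv A ** B)) (at 0)"
proof -
  have eq: "A + t *\<^sub>R B = A ** (mat 1 + t *\<^sub>R (matrix_inv A ** B))" for t
    using inv_props[OF assms]
    by (simp add: matrix_add_ldistrib mm_scale_r matrix_mul_assoc)
  have "det (A + t *\<^sub>R B) = det A * det (mat 1 + t *\<^sub>R (matrix_inv A ** B))" for t
    by (simp only: eq det_mul)
  moreover have "((\<lambda>t. det A * det (mat 1 + t *\<^sub>R (matrix_inv A ** B))) has_real_derivative
     det A * trace (matrix_inv A ** B)) (at 0)"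
    by (intro DERIV_cmult jacobi0)
  ultimately show ?thesis by simp
qed

lemma outer_mv: "outer p q *v r = (q \<bullet> r) *\<^sub>R p"
  by (simp add: outer_def vec_eq_iff matrix_vector_mult_def inner_vec_def sum_distrib_left mult_ac)

lemma outer_add_l: "outer (x + y) q = outer x q + outer y q"
  by (simp add: outer_def vec_eq_iff algebra_simps)

lemma outer_scale_l: "outer (c *\<^sub>R x) q = c *\<^sub>R outer x q"
  by (simp add: outer_def vec_eq_iff algebra_simps)

lemma smv: "(c *\<^sub>R (X::real^'n::finite^'m::finite)) *v r = c *\<^sub>R (X *v r)"
  by (simp add: scaleR_matrix_vector_assoc)

lemma sherman:
  fixes G :: "real^'n::finite^'n"
  assumes inv: "invertible G" and nz: "1 + s * (a \<bullet> (matrix_inv G *v a)) \<noteq> 0"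
  shows "matrix_inv (G + s *\<^sub>R outer a a) =
    matrix_inv G - (s / (1 + s * (a \<bullet> (matrix_inv G *v a)))) *\<^sub>R outer (matrix_inv G *v a) (a v* matrix_inv G)"
proof (rule inv_unique)
  define Ai where "Ai = matrix_inv G"
  define c where "c = s / (1 + s * (a \<bullet> (Ai *v a)))"
  have GA: "G ** Ai = mat 1" using inv_props[OF inv] by (simp add: Ai_def)
  have c: "s - c - s * c * (a \<bullet> (Ai *v a)) = 0"
    using nz unfolding c_def Ai_def by (simp add: field_simps)
  have "(G + s *\<^sub>R outer a a) ** (Ai - c *\<^sub>R outer (Ai *v a) (a v* Ai))
     = mat 1 + (s - c - s * c * (a \<bullet> (Ai *v a))) *\<^sub>R outer a (a v* Ai)"
    by (simp add: mm_add_r mm_diff_l mm_scale_l mm_scale_r GA mat_outer outer_mat outer_outer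
       matrix_vector_mul_assoc algebra_simps outer_mv outer_add_l outer_scale_l dot_lmul_matrix smv)
  then show "(G + s *\<^sub>R outer a a) ** (matrix_inv G - (s / (1 + s * (a \<bullet> (matrix_inv G *v a)))) *\<^sub>R
      outer (matrix_inv G *v a) (a v* matrix_inv G)) = mat 1"
    using c by (simp add: Ai_def c_def)
qed

lemma sum_line: "(\<Sum>i\<in>UNIV. (v + t *\<^sub>R axis j 1)$i) = (\<Sum>i\<in>UNIV. v$i) + (t::real)"
  by (simp add: sum.distrib axis_def flip: sum_distrib_left)

lemma sum_line': "(\<Sum>i\<in>UNIV. v$i + t * axis j 1 $ i) = (\<Sum>i\<in>UNIV. v$i) + (t::real)"
  using sum_line[of v t j] by simp

lemma E_deriv1:
  fixes V :: "real^'k::finite^'m::finite"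
  assumes pos: "det (Gram V v) > 0"
  shows "((\<lambda>t. Efun V (v + t *\<^sub>R axis j 1)) has_real_derivative
    (-(1 / real CARD('k)) * ((V$j) \<bullet> (matrix_inv (Gram V v) *v (V$j))) + 1)) (at 0)"
proof -
  define G where "G = Gram V v"
  define a where "a = V$j"
  have inv: "invertible G" using pos invertible_det_nz G_def by force
  have eq: "Efun V (v + t *\<^sub>R axis j 1) = - (1 / real CARD('k)) * ln (det (G + t *\<^sub>R outer a a))
     + ((\<Sum>i\<in>UNIV. v$i) + t)" for t
    by (simp add: Efun_def gram_line sum_line' G_def a_def)
  have d: "((\<lambda>t. det (G + t *\<^sub>R outer a a)) has_real_derivative det G * (a \<bullet> (matrix_inv G *v a))) (at 0)"
    using jacobi[OF inv, of "outer a a"] by (simp add: trace_outer)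
  have g0: "det (G + 0 *\<^sub>R outer a a) = det G" by simp
  have l: "((\<lambda>t. ln (det (G + t *\<^sub>R outer a a))) has_real_derivative
      (1 / det (G + 0 *\<^sub>R outer a a)) * (det G * (a \<bullet> (matrix_inv G *v a)))) (at 0)"
    by (rule DERIV_chain2[OF DERIV_ln_divide d]) (use pos g0 G_def in simp)
  have "((\<lambda>t. - (1 / real CARD('k)) * ln (det (G + t *\<^sub>R outer a a)) + ((\<Sum>i\<in>UNIV. v$i) + t))
     has_real_derivative (- (1 / real CARD('k)) * ((1 / det (G + 0 *\<^sub>R outer a a)) * (det G * (a \<bullet> (matrix_inv G *v a)))) + 1)) (at 0)"
    by (intro DERIV_add DERIV_cmult l) (auto intro!: derivative_eq_intros)
  then show ?thesis using pos by (simp add: eq G_def a_def)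
qed

lemma pderiv1:
  fixes V :: "real^'k::finite^'m::finite"
  assumes pos: "det (Gram V v) > 0"
  shows "pderiv_at j (Efun V) v = -(1 / real CARD('k)) * ((V$j) \<bullet> (matrix_inv (Gram V v) *v (V$j))) + 1"
  unfolding pderiv_at_def by (rule DERIV_imp_deriv[OF E_deriv1[OF pos]])


lemma hess_entry:
  fixes V :: "real^'k::finite^'m::finite"
  assumes pos: "det (Gram V w) > 0"
  shows "hessian (Efun V) w $ i $ j = (1 / real CARD('k)) *
    (((V$j) \<bullet> (matrix_inv (Gram V w) *v (V$i))) * ((V$i) \<bullet> (matrix_inv (Gram V w) *v (V$j))))"
proof -
  define G where "G = Gram V w"
  define Ai where "Ai = matrix_inv G"
  define a where "a = V$i"
  define b where "b = V$j"
  define N where "N = real CARD('k)"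
  define \<alpha> where "\<alpha> = a \<bullet> (Ai *v a)"
  define \<beta> where "\<beta> = b \<bullet> (Ai *v b)"
  define \<gamma> where "\<gamma> = (b \<bullet> (Ai *v a)) * (a \<bullet> (Ai *v b))"
  have posG: "det G > 0" using pos G_def by simp
  have inv: "invertible G" using posG invertible_det_nz by force
  have cont: "isCont (\<lambda>s. det (G + s *\<^sub>R outer a a)) 0"
    using DERIV_isCont[OF jacobi[OF inv]] .
  then have "((\<lambda>s. det (G + s *\<^sub>R outer a a)) \<longlongrightarrow> det (G + 0 *\<^sub>R outer a a)) (nhds 0)"
    using tendsto_at_iff_tendsto_nhds[of "\<lambda>s. det (G + s *\<^sub>R outer a a)" 0] unfolding isCont_def by simp
  then have "((\<lambda>s. det (G + s *\<^sub>R outer a a)) \<longlongrightarrow> det G) (nhds 0)" by simp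
  from order_tendstoD(1)[OF this posG]
  have ev1: "eventually (\<lambda>s. 0 < det (G + s *\<^sub>R outer a a)) (nhds 0)" .
  have "((\<lambda>s. 1 + s * \<alpha>) \<longlongrightarrow> 1) (nhds (0::real))"
    by (auto intro!: tendsto_eq_intros simp: filterlim_ident)
  from order_tendstoD(1)[OF this, of 0]
  have ev2: "eventually (\<lambda>s. 0 < 1 + s * \<alpha>) (nhds 0)" by simp
  have ev: "eventually (\<lambda>s. pderiv_at j (Efun V) (w + s *\<^sub>R axis i 1) =
       -(1/N) * (\<beta> - s / (1 + s * \<alpha>) * \<gamma>) + 1) (nhds 0)"
    using ev1 ev2
  proof eventually_elim
    case (elim s)
    have gl: "Gram V (w + s *\<^sub>R axis i 1) = G + s *\<^sub>R outer a a"
      by (simp add: gram_line G_def a_def)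
    have sm: "matrix_inv (G + s *\<^sub>R outer a a) = Ai - (s / (1 + s * \<alpha>)) *\<^sub>R outer (Ai *v a) (a v* Ai)"
      using sherman[OF inv, of s a] elim(2) unfolding Ai_def \<alpha>_def by fastforce
    have "b \<bullet> ((Ai - (s / (1 + s * \<alpha>)) *\<^sub>R outer (Ai *v a) (a v* Ai)) *v b)
        = \<beta> - s / (1 + s * \<alpha>) * \<gamma>"
      by (simp add: \<beta>_def \<gamma>_def matrix_vector_mult_diff_rdistrib smv outer_mv dot_lmul_matrix
          inner_diff_right algebra_simps)
    then show ?case
      using pderiv1[of V "w + s *\<^sub>R axis i 1" j] elim(1)
      by (simp add: gl sm N_def b_def)
  qed
  have Npos: "N > 0" by (simp add: N_def)
  have D: "((\<lambda>s. -(1/N) * (\<beta> - s / (1 + s * \<alpha>) * \<gamma>) + 1) has_real_derivative (1/N) * \<gamma>) (at 0)"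
    using Npos by (auto intro!: derivative_eq_intros)
  have "((\<lambda>s. pderiv_at j (Efun V) (w + s *\<^sub>R axis i 1)) has_real_derivative (1/N) * \<gamma>) (at 0)"
    using D DERIV_cong_ev[OF refl ev refl] by simp
  then have "pderiv_at i (\<lambda>v. pderiv_at j (Efun V) v) w = (1/N) * \<gamma>"
    unfolding pderiv_at_def[of i] by (rule DERIV_imp_deriv)
  then show ?thesis
    by (simp add: hessian_def N_def \<gamma>_def Ai_def G_def a_def b_def)
qed

lemma sumsq_id:
  fixes W :: "real^'k::finite^'m::finite"
  shows "(\<Sum>i\<in>UNIV. u$i * (\<Sum>j\<in>UNIV. ((\<Sum>p\<in>UNIV. W$i$p * W$j$p)^2) * u$j))
       = (\<Sum>p\<in>UNIV. \<Sum>q\<in>UNIV. (Gram W u $ p $ q)^2)"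
proof -
  have "(\<Sum>i\<in>UNIV. u$i * (\<Sum>j\<in>UNIV. ((\<Sum>p\<in>UNIV. W$i$p * W$j$p)^2) * u$j))
      = (\<Sum>i\<in>UNIV. \<Sum>j\<in>UNIV. \<Sum>p\<in>UNIV. \<Sum>q\<in>UNIV. u$i * u$j * W$i$p * W$j$p * W$i$q * W$j$q)"
    by (simp add: power2_eq_square sum_product sum_distrib_left sum_distrib_right mult_ac)
  also have "\<dots> = (\<Sum>i\<in>UNIV. \<Sum>j\<in>UNIV. \<Sum>q\<in>UNIV. \<Sum>p\<in>UNIV. u$i * u$j * W$i$p * W$j$p * W$i$q * W$j$q)"
    by (simp add: mult_ac)
  also have "\<dots> = (\<Sum>i\<in>UNIV. \<Sum>q\<in>UNIV. \<Sum>j\<in>UNIV. \<Sum>p\<in>UNIV. u$i * u$j * W$i$p * W$j$p * W$i$q * W$j$q)"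
    by (rule sum.cong[OF refl], rule sum.swap)
  also have "\<dots> = (\<Sum>q\<in>UNIV. \<Sum>i\<in>UNIV. \<Sum>j\<in>UNIV. \<Sum>p\<in>UNIV. u$i * u$j * W$i$p * W$j$p * W$i$q * W$j$q)"
    by (rule sum.swap)
  also have "\<dots> = (\<Sum>q\<in>UNIV. \<Sum>i\<in>UNIV. \<Sum>p\<in>UNIV. \<Sum>j\<in>UNIV. u$i * u$j * W$i$p * W$j$p * W$i$q * W$j$q)"
    by (rule sum.cong[OF refl], rule sum.cong[OF refl], rule sum.swap)
  also have "\<dots> = (\<Sum>q\<in>UNIV. \<Sum>p\<in>UNIV. \<Sum>i\<in>UNIV. \<Sum>j\<in>UNIV. u$i * u$j * W$i$p * W$j$p * W$i$q * W$j$q)"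
    by (rule sum.cong[OF refl], rule sum.swap)
  also have "\<dots> = (\<Sum>p\<in>UNIV. \<Sum>q\<in>UNIV. \<Sum>i\<in>UNIV. \<Sum>j\<in>UNIV. u$i * u$j * W$i$p * W$j$p * W$i$q * W$j$q)"
    by (rule sum.swap)
  also have "\<dots> = (\<Sum>p\<in>UNIV. \<Sum>q\<in>UNIV. (Gram W u $ p $ q)^2)"
    by (simp add: gram_entry power2_eq_square sum_product mult_ac)
  finally show ?thesis .
qed


theorem mainTheorem3:
  fixes x :: "'m::finite \<Rightarrow> real^'n::finite"
    and phi :: "'k::finite \<Rightarrow> real^'n \<Rightarrow> real"
    and w u :: "real^'m"
  assumes "inj x"
    and "rank (vmat x phi) = CARD('k)"
    and "\<forall>i. w $ i \<ge> 0"
    and "det (Gram (vmat x phi) w) > 0"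
  shows "u \<bullet> (hessian (Efun (vmat x phi)) w *v u) = 0 \<longleftrightarrow>
         (\<forall>h k. (\<Sum>i\<in>UNIV. u $ i * phi h (x i) * phi k (x i)) = 0)"
proof -
  define V where "V = vmat x phi"
  define N where "N = real CARD('k)"
  define G where "G = Gram V w"
  define A where "A = matrix_inv G"
  define C :: "real^'k^'m" where "C = (\<chi> i h. sqrt (w$i) * V$i$h)"
  define B where "B = C ** A"
  define W where "W = V ** transpose B"
  define H where "H = hessian (Efun V) w"
  have posG: "det G > 0" using assms(4) by (simp add: G_def V_def)
  have inv: "invertible G" using posG invertible_det_nz by force
  have GA: "G ** A = mat 1" and AG: "A ** G = mat 1" using inv_props[OF inv] by (auto simp: A_def)
  have CG: "transpose C ** C = G"
  proof -
    have sw: "sqrt (w$i) * (sqrt (w$i) * z) = w$i * z" for i z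
      using assms(3) by (simp flip: mult.assoc)
    show ?thesis
      by (simp add: sw vec_eq_iff C_def G_def gram_entry matrix_matrix_mult_def transpose_def mult_ac)
  qed
  have BB: "transpose B ** B = transpose A"
  proof -
    have "transpose B ** B = transpose A ** (transpose C ** C) ** A"
      by (simp add: B_def matrix_transpose_mul matrix_mul_assoc)
    also have "\<dots> = transpose A" by (simp add: CG GA flip: matrix_mul_assoc)
    finally show ?thesis .
  qed
  have dotW: "p \<bullet> (A *v q) = (B *v p) \<bullet> (B *v q)" for p q
  proof -
    have "p \<bullet> (A *v q) = (p v* A) \<bullet> q" by (simp add: dot_lmul_matrix)
    also have "p v* A = (transpose B ** B) *v p" by (simp add: BB)
    also have "\<dots> = transpose B *v (B *v p)" by (simp add: matrix_vector_mul_assoc)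
    also have "(transpose B *v (B *v p)) \<bullet> q = (B *v p) \<bullet> (B *v q)"
      by (simp add: dot_lmul_matrix)
    finally show ?thesis .
  qed
  have Wrow: "(B *v (V$i)) $ p = W $ i $ p" for i p
    by (simp add: W_def matrix_vector_mult_def matrix_matrix_mult_def transpose_def mult_ac)
  have Hij: "H $ i $ j = (1/N) * (\<Sum>p\<in>UNIV. W$i$p * W$j$p)^2" for i j
  proof -
    have "H $ i $ j = (1/N) * (((V$j) \<bullet> (A *v (V$i))) * ((V$i) \<bullet> (A *v (V$j))))"
      using hess_entry[OF posG[unfolded G_def]] by (simp add: H_def N_def A_def G_def)
    also have "\<dots> = (1/N) * (\<Sum>p\<in>UNIV. W$i$p * W$j$p)^2"
      unfolding dotW by (simp add: inner_vec_def Wrow power2_eq_square mult_ac)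
    finally show ?thesis .
  qed
  have quad: "u \<bullet> (H *v u) = (1/N) * (\<Sum>p\<in>UNIV. \<Sum>q\<in>UNIV. (Gram W u $ p $ q)^2)"
  proof -
    have "u \<bullet> (H *v u) = (1/N) * (\<Sum>i\<in>UNIV. u$i * (\<Sum>j\<in>UNIV. ((\<Sum>p\<in>UNIV. W$i$p * W$j$p)^2) * u$j))"
      by (simp add: inner_vec_def matrix_vector_mult_def Hij sum_distrib_left mult_ac)
    then show ?thesis by (simp add: sumsq_id)
  qed
  have Npos: "N > 0" by (simp add: N_def)
  have step1: "u \<bullet> (H *v u) = 0 \<longleftrightarrow> Gram W u = 0"
  proof -
    have "u \<bullet> (H *v u) = 0 \<longleftrightarrow> (\<Sum>p\<in>UNIV. \<Sum>q\<in>UNIV. (Gram W u $ p $ q)^2) = 0"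
      using Npos by (simp add: quad)
    also have "\<dots> \<longleftrightarrow> (\<forall>p q. Gram W u $ p $ q = 0)"
      by (simp add: sum_nonneg_eq_0_iff sum_nonneg)
    also have "\<dots> \<longleftrightarrow> Gram W u = 0" by (simp add: vec_eq_iff)
    finally show ?thesis .
  qed
  have TW: "Gram W u = B ** Gram V u ** transpose B"
    by (simp add: Gram_def W_def matrix_transpose_mul matrix_mul_assoc)
  have step2: "Gram W u = 0 \<longleftrightarrow> Gram V u = 0"
  proof
    assume h: "Gram W u = 0"
    have "transpose A ** Gram V u ** transpose A = transpose B ** Gram W u ** B"
      by (simp add: TW BB[symmetric] matrix_mul_assoc)
    also have "\<dots> = 0" by (simp add: h vec_eq_iff matrix_matrix_mult_def)
    finally have z: "transpose A ** Gram V u ** transpose A = 0" .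
    have TG: "transpose G ** transpose A = mat 1" "transpose A ** transpose G = mat 1"
      using AG GA by (simp_all flip: matrix_transpose_mul)
    have "transpose G ** (transpose A ** Gram V u ** transpose A) ** transpose G
       = (transpose G ** transpose A) ** Gram V u ** (transpose A ** transpose G)"
      by (simp add: matrix_mul_assoc)
    then have "Gram V u = transpose G ** (transpose A ** Gram V u ** transpose A) ** transpose G"
      by (simp add: TG)
    also have "\<dots> = 0" unfolding z by (simp add: vec_eq_iff matrix_matrix_mult_def)
    finally show "Gram V u = 0" .
  next
    assume "Gram V u = 0"
    then show "Gram W u = 0" by (simp add: TW vec_eq_iff matrix_matrix_mult_def)
  qed
  have step3: "Gram V u = 0 \<longleftrightarrow> (\<forall>h k. (\<Sum>i\<in>UNIV. u $ i * phi h (x i) * phi k (x i)) = 0)"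
    by (simp add: vec_eq_iff gram_entry V_def vmat_def mult_ac)
  show ?thesis using step1 step2 step3 by (simp add: H_def V_def)
qed

end
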